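(* Let $\mathsf E$ be a completely unsharp observable on $\mathcal H_S$, and let $\mathcal I$ be an $\mathsf E$-instrument with the following property: for every full-rank state $\rho$ on $\mathcal H_S$ and every outcome $x$, the operator $\mathcal I_x(\rho)$ is positive definite. Then $\mathcal I$ is implemented by some measurement scheme constrained by the third law.
   Context: All Hilbert spaces are finite-dimensional and complex. A state is a positive operator of unit trace; it is full-rank if it is positive definite. A channel is a completely positive trace-preserving linear map. A channel is constrained by the third law if it maps every full-rank state on its input space to a full-rank state on its output space. Let $2\le\dim\mathcal H_S<\infty$. An observable is a finite family $\mathsf E=\{\mathsf E_x\}_{x\in\mathcal X}$ of nonzero operators with $0\le\mathsf E_x\le\mathbb 1$ and $\sum_x\mathsf E_x=\mathbb 1$. It is completely unsharp if, for every $x$, the spectrum of $\mathsf E_x$ contains neither $0$ nor $1$. An $\mathsf E$-instrument is a family $\{\mathcal I_x\}_{x\in\mathcal X}$ of completely positive maps on $\mathcal L(\mathcal H_S)$ with $\mathrm{tr}[\mathcal I_x(\rho)]=\mathrm{tr}[\mathsf E_x\rho]$ for all $x$ and all states $\rho$. A measurement scheme $(\mathcal H_A,\xi,\mathcal E,\mathsf Z)$ consists of: - a finite-dimensional $\mathcal H_A$; - a state $\xi$ on $\mathcal H_A$; - a channel $\mathcal E$ on $\mathcal L(\mathcal H_S\otimes\mathcal H_A)$; - positive operators $\{\mathsf Z_x\}_{x\in\mathcal X}$ on $\mathcal H_A$ summing to $\mathbb 1$. It implements $\mathcal I_x(\rho)=\mathrm{tr}_A[(\mathbb 1\otimes\mathsf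 Z_x)\mathcal E(\rho\otimes\xi)]$. It is constrained by the third law if $\xi$ is full-rank and $\mathcal E$ is constrained by the third law. *)

theory Defs
  imports "Jordan_Normal_Form.Char_Poly"
begin

text \<open>Finite-dimensional complex Hilbert spaces are modelled as C^d, operators as
  d x d complex matrices (Jordan_Normal_Form). The tensor product C^m (x) C^n is
  identified with C^(m*n) via the index (i,k) |-> i*n + k (Kronecker convention).\<close>

definition mtrace :: "complex mat \<Rightarrow> complex" where
  "mtrace A = (\<Sum>i<dim_row A. A $$ (i,i))"

definition qform :: "complex mat \<Rightarrow> complex vec \<Rightarrow> complex" where
  "qform A v = (\<Sum>i<dim_row A. \<Sum>j<dim_col A. cnj (v $ i) * A $$ (i,j) * v $ j)"

definition psd :: "nat \<Rightarrow> complex mat \<Rightarrow> bool" where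
  "psd d A \<longleftrightarrow> A \<in> carrier_mat d d \<and>
     (\<forall>v \<in> carrier_vec d. Im (qform A v) = 0 \<and> Re (qform A v) \<ge> 0)"

definition pd :: "nat \<Rightarrow> complex mat \<Rightarrow> bool" where
  "pd d A \<longleftrightarrow> psd d A \<and> (\<forall>v \<in> carrier_vec d. v \<noteq> 0\<^sub>v d \<longrightarrow> Re (qform A v) > 0)"

definition is_state :: "nat \<Rightarrow> complex mat \<Rightarrow> bool" where
  "is_state d \<rho> \<longleftrightarrow> psd d \<rho> \<and> mtrace \<rho> = 1"

definition full_rank_state :: "nat \<Rightarrow> complex mat \<Rightarrow> bool" where
  "full_rank_state d \<rho> \<longleftrightarrow> is_state d \<rho> \<and> pd d \<rho>"

definition kron :: "complex mat \<Rightarrow> complex mat \<Rightarrow> complex mat" where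
  "kron A B = mat (dim_row A * dim_row B) (dim_col A * dim_col B)
     (\<lambda>(i,j). A $$ (i div dim_row B, j div dim_col B) * B $$ (i mod dim_row B, j mod dim_col B))"

definition ptrace2 :: "nat \<Rightarrow> nat \<Rightarrow> complex mat \<Rightarrow> complex mat" where
  "ptrace2 m n M = mat m m (\<lambda>(i,j). \<Sum>k<n. M $$ (i*n + k, j*n + k))"

definition lin_map :: "nat \<Rightarrow> nat \<Rightarrow> (complex mat \<Rightarrow> complex mat) \<Rightarrow> bool" where
  "lin_map d d' \<Phi> \<longleftrightarrow>
     (\<forall>A \<in> carrier_mat d d. \<Phi> A \<in> carrier_mat d' d') \<and>
     (\<forall>A \<in> carrier_mat d d. \<forall>B \<in> carrier_mat d d. \<Phi> (A + B) = \<Phi> A + \<Phi> B) \<and>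
     (\<forall>A \<in> carrier_mat d d. \<forall>c. \<Phi> (c \<cdot>\<^sub>m A) = c \<cdot>\<^sub>m \<Phi> A)"

text \<open>The map id_k (x) Phi on L(C^k (x) C^d): apply Phi to each d x d block.\<close>
definition ampl :: "nat \<Rightarrow> nat \<Rightarrow> nat \<Rightarrow> (complex mat \<Rightarrow> complex mat) \<Rightarrow> complex mat \<Rightarrow> complex mat" where
  "ampl k d d' \<Phi> M = mat (k*d') (k*d') (\<lambda>(p,q).
     \<Phi> (mat d d (\<lambda>(a,b). M $$ ((p div d')*d + a, (q div d')*d + b))) $$ (p mod d', q mod d'))"

definition cp_map :: "nat \<Rightarrow> nat \<Rightarrow> (complex mat \<Rightarrow> complex mat) \<Rightarrow> bool" where
  "cp_map d d' \<Phi> \<longleftrightarrow> lin_map d d' \<Phi> \<and>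
     (\<forall>k M. psd (k*d) M \<longrightarrow> psd (k*d') (ampl k d d' \<Phi> M))"

definition channel :: "nat \<Rightarrow> nat \<Rightarrow> (complex mat \<Rightarrow> complex mat) \<Rightarrow> bool" where
  "channel d d' \<Phi> \<longleftrightarrow> cp_map d d' \<Phi> \<and> (\<forall>A \<in> carrier_mat d d. mtrace (\<Phi> A) = mtrace A)"

definition third_law_channel :: "nat \<Rightarrow> nat \<Rightarrow> (complex mat \<Rightarrow> complex mat) \<Rightarrow> bool" where
  "third_law_channel d d' \<Phi> \<longleftrightarrow> channel d d' \<Phi> \<and>
     (\<forall>\<rho>. full_rank_state d \<rho> \<longrightarrow> full_rank_state d' (\<Phi> \<rho>))"

definition msum :: "nat \<Rightarrow> 'x set \<Rightarrow> ('x \<Rightarrow> complex mat) \<Rightarrow> complex mat" where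
  "msum d X E = mat d d (\<lambda>(i,j). \<Sum>x\<in>X. E x $$ (i,j))"

definition observable :: "nat \<Rightarrow> 'x set \<Rightarrow> ('x \<Rightarrow> complex mat) \<Rightarrow> bool" where
  "observable d X E \<longleftrightarrow> finite X \<and>
     (\<forall>x \<in> X. E x \<noteq> 0\<^sub>m d d \<and> psd d (E x) \<and> psd d (1\<^sub>m d - E x)) \<and>
     msum d X E = 1\<^sub>m d"

definition completely_unsharp :: "nat \<Rightarrow> 'x set \<Rightarrow> ('x \<Rightarrow> complex mat) \<Rightarrow> bool" where
  "completely_unsharp d X E \<longleftrightarrow> observable d X E \<and>
     (\<forall>x \<in> X. \<not> eigenvalue (E x) 0 \<and> \<not> eigenvalue (E x) 1)"

definition E_instrument :: "nat \<Rightarrow> 'x set \<Rightarrow> ('x \<Rightarrow> complex mat) \<Rightarrow> ('x \<Rightarrow> complex mat \<Rightarrow> complex mat) \<Rightarrow> bool" where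
  "E_instrument d X E I \<longleftrightarrow> (\<forall>x \<in> X. cp_map d d (I x)) \<and>
     (\<forall>x \<in> X. \<forall>\<rho>. is_state d \<rho> \<longrightarrow> mtrace (I x \<rho>) = mtrace (E x * \<rho>))"

text \<open>Measurement scheme (H_A = C^dA, xi, channel Ec on C^dS (x) C^dA, pointer Z),
  implementing I, and constrained by the third law.\<close>
definition implements :: "nat \<Rightarrow> 'x set \<Rightarrow> ('x \<Rightarrow> complex mat \<Rightarrow> complex mat) \<Rightarrow>
    nat \<Rightarrow> complex mat \<Rightarrow> (complex mat \<Rightarrow> complex mat) \<Rightarrow> ('x \<Rightarrow> complex mat) \<Rightarrow> bool" where
  "implements dS X I dA \<xi> Ec Z \<longleftrightarrow>
     is_state dA \<xi> \<and> channel (dS*dA) (dS*dA) Ec \<and>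
     (\<forall>x \<in> X. psd dA (Z x)) \<and> msum dA X Z = 1\<^sub>m dA \<and>
     (\<forall>x \<in> X. \<forall>\<rho> \<in> carrier_mat dS dS.
        I x \<rho> = ptrace2 dS dA (kron (1\<^sub>m dS) (Z x) * Ec (kron \<rho> \<xi>)))"

definition third_law_scheme :: "nat \<Rightarrow> nat \<Rightarrow> complex mat \<Rightarrow> (complex mat \<Rightarrow> complex mat) \<Rightarrow> bool" where
  "third_law_scheme dS dA \<xi> Ec \<longleftrightarrow> full_rank_state dA \<xi> \<and> third_law_channel (dS*dA) (dS*dA) Ec"

end

theory Submission
  imports Defs
begin

lemma sum_split:
  fixes f :: "nat \<Rightarrow> 'a::comm_monoid_add"
  shows "(\<Sum>p<m*n. f p) = (\<Sum>u<m. \<Sum>s<n. f (u*n+s))"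
proof -
  have "(\<Sum>p<m*n. f p) = (\<Sum>u<m. sum f {u*n..<u*n+n})"
    using sum.nat_group[of f n m] by simp
  also have "\<dots> = (\<Sum>u<m. \<Sum>s<n. f (u*n+s))"
    by (rule sum.cong[OF refl]) (simp add: sum.atLeastLessThan_shift_0[of f] lessThan_atLeast0 comp_def add.commute)
  finally show ?thesis .
qed

lemma idx_lt: "u < m \<Longrightarrow> s < (n::nat) \<Longrightarrow> u*n+s < m*n"
proof -
  assume a: "u < m" "s < n"
  have "u*n+s < u*n + n" using a by simp
  also have "\<dots> = Suc u * n" by simp
  also have "\<dots> \<le> m*n" using a by (intro mult_right_mono) auto
  finally show ?thesis .
qed

lemma sum_delta_mult: "s < (n::nat) \<Longrightarrow> (\<Sum>t<n. (a::complex) * (if s = t then b else 0) * f t) = a * b * f s"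
  by (simp add: if_distrib[of "\<lambda>x. a * x * _"] cong: if_cong)

lemma idx_div[simp]: "s < (n::nat) \<Longrightarrow> (u*n+s) div n = u" by simp
lemma idx_mod[simp]: "s < (n::nat) \<Longrightarrow> (u*n+s) mod n = s" by simp

definition asm :: "nat \<Rightarrow> nat \<Rightarrow> (nat \<Rightarrow> complex mat) \<Rightarrow> complex mat" where
  "asm n m F = mat (m*n) (m*n) (\<lambda>(p,q). if p mod n = q mod n then F (p mod n) $$ (p div n, q div n) else 0)"

lemma asm_carrier: "asm n m F \<in> carrier_mat (m*n) (m*n)" by (simp add: asm_def)

lemma qform_asm:
  assumes v: "v \<in> carrier_vec (m*n)" and that: "\<forall>s<n. F s \<in> carrier_mat m m"
  shows "qform (asm n m F) v = (\<Sum>s<n. qform (F s) (vec m (\<lambda>u. v $ (u*n+s))))"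
proof -
  have FC: "\<And>s. s < n \<Longrightarrow> dim_row (F s) = m \<and> dim_col (F s) = m" using that by auto
  have "qform (asm n m F) v = (\<Sum>p<m*n. \<Sum>q<m*n. cnj (v $ p) * asm n m F $$ (p,q) * v $ q)"
    by (simp add: qform_def asm_def)
  also have "\<dots> = (\<Sum>u<m. \<Sum>s<n. \<Sum>w<m. \<Sum>t<n. cnj (v $ (u*n+s)) * (if s = t then F s $$ (u,w) else 0) * v $ (w*n+t))"
    by (simp add: sum_split asm_def idx_lt) (intro sum.cong refl, simp)
  also have "\<dots> = (\<Sum>u<m. \<Sum>s<n. \<Sum>w<m. cnj (v $ (u*n+s)) * F s $$ (u,w) * v $ (w*n+s))"
    by (intro sum.cong refl) (simp add: sum_delta_mult)
  also have "\<dots> = (\<Sum>s<n. \<Sum>u<m. \<Sum>w<m. cnj (v $ (u*n+s)) * F s $$ (u,w) * v $ (w*n+s))"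
    by (rule sum.swap)
  also have "\<dots> = (\<Sum>s<n. qform (F s) (vec m (\<lambda>u. v $ (u*n+s))))"
    by (intro sum.cong refl) (simp add: qform_def FC)
  finally show ?thesis .
qed
lemma psd_asm:
  assumes "\<forall>s<n. psd m (F s)"
  shows "psd (m*n) (asm n m F)"
proof -
  have C: "\<forall>s<n. F s \<in> carrier_mat m m" using assms by (auto simp: psd_def)
  show ?thesis unfolding psd_def
  proof (intro conjI ballI asm_carrier)
    fix v :: "complex vec" assume v: "v \<in> carrier_vec (m*n)"
    have q: "qform (asm n m F) v = (\<Sum>s<n. qform (F s) (vec m (\<lambda>u. v $ (u*n+s))))"
      using qform_asm[OF v C] .
    have "\<forall>s<n. Im (qform (F s) (vec m (\<lambda>u. v $ (u*n+s)))) = 0 \<and> Re (qform (F s) (vec m (\<lambda>u. v $ (u*n+s)))) \<ge> 0"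
      using assms by (auto simp: psd_def)
    then show "Im (qform (asm n m F) v) = 0" "Re (qform (asm n m F) v) \<ge> 0"
      unfolding q by (auto simp: Im_sum Re_sum intro: sum_nonneg)
  qed
qed

lemma pd_asm:
  assumes "\<forall>s<n. pd m (F s)"
  shows "pd (m*n) (asm n m F)"
proof -
  have P: "\<forall>s<n. psd m (F s)" using assms by (auto simp: pd_def)
  have C: "\<forall>s<n. F s \<in> carrier_mat m m" using P by (auto simp: psd_def)
  show ?thesis unfolding pd_def
  proof (intro conjI ballI impI psd_asm[OF P])
    fix v :: "complex vec" assume v: "v \<in> carrier_vec (m*n)" and nz: "v \<noteq> 0\<^sub>v (m*n)"
    obtain p where p: "p < m*n" "v $ p \<noteq> 0" using v nz by (metis eq_vecI carrier_vecD index_zero_vec(1,2))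
    have np: "n > 0" using p(1) by (cases n) auto
    define s where "s = p mod n"
    define u where "u = p div n"
    have s: "s < n" using np by (simp add: s_def)
    have u: "u < m" using p(1) np by (simp add: u_def less_mult_imp_div_less)
    have pe: "p = u*n+s" by (simp add: u_def s_def)
    have q: "qform (asm n m F) v = (\<Sum>s<n. qform (F s) (vec m (\<lambda>u. v $ (u*n+s))))"
      using qform_asm[OF v C] .
    have ge: "\<forall>s<n. Re (qform (F s) (vec m (\<lambda>u. v $ (u*n+s)))) \<ge> 0"
      using P by (auto simp: psd_def)
    have "vec m (\<lambda>u. v $ (u*n+s)) \<noteq> 0\<^sub>v m"
    proof
      assume "vec m (\<lambda>u. v $ (u*n+s)) = 0\<^sub>v m"
      then have "vec m (\<lambda>u. v $ (u*n+s)) $ u = 0\<^sub>v m $ u" by simp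
      then show False using u p(2) pe by simp
    qed
    then have gt: "Re (qform (F s) (vec m (\<lambda>u. v $ (u*n+s)))) > 0"
      using assms s by (auto simp: pd_def)
    show "Re (qform (asm n m F) v) > 0"
      unfolding q Re_sum by (rule sum_pos2[of "{..<n}" s]) (use s gt ge in auto)
  qed
qed

lemma mtrace_asm:
  shows "mtrace (asm n m F) = (\<Sum>s<n. \<Sum>u<m. F s $$ (u,u))"
proof -
  have "mtrace (asm n m F) = (\<Sum>u<m. \<Sum>s<n. F s $$ (u,u))"
    by (simp add: mtrace_def asm_def sum_split idx_lt)
  then show ?thesis by (simp add: sum.swap[of _ "{..<m}"])
qed

lemma mtrace_asm': "\<forall>s<n. F s \<in> carrier_mat m m \<Longrightarrow> mtrace (asm n m F) = (\<Sum>s<n. mtrace (F s))"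
  unfolding mtrace_asm by (intro sum.cong refl) (auto simp: mtrace_def)

lemma hl_if: "cnj (if a = c then x else 0) * y * (if b = c then z else 0) = (if a = c then (if b = c then cnj x * y * z else 0) else 0)"
  by simp

lemma sum_if_const: "(\<Sum>x\<in>A. if P then f x else 0) = (if P then (\<Sum>x\<in>A. f x) else (0::'a::comm_monoid_add))"
  by simp

lemma mtrace_ptrace:
  assumes "M \<in> carrier_mat (m*n) (m*n)"
  shows "mtrace (ptrace2 m n M) = mtrace M"
  using assms by (simp add: mtrace_def ptrace2_def sum_split)

lemma qform_ptrace:
  assumes M: "M \<in> carrier_mat (m*n) (m*n)" and u: "u \<in> carrier_vec m"
  shows "qform (ptrace2 m n M) u = (\<Sum>c<n. qform M (vec (m*n) (\<lambda>p. if p mod n = c then u $ (p div n) else 0)))"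
proof -
  have "(\<Sum>c<n. qform M (vec (m*n) (\<lambda>p. if p mod n = c then u $ (p div n) else 0)))
     = (\<Sum>c<n. \<Sum>i<m. \<Sum>a<n. \<Sum>j<m. \<Sum>b<n. cnj (if a = c then u $ i else 0) * M $$ (i*n+a, j*n+b) * (if b = c then u $ j else 0))"
    using M by (simp add: qform_def sum_split idx_lt) (intro sum.cong refl, simp)
  also have "\<dots> = (\<Sum>c<n. \<Sum>i<m. \<Sum>j<m. cnj (u $ i) * M $$ (i*n+c, j*n+c) * u $ j)"
    apply (rule sum.cong[OF refl], rule sum.cong[OF refl])
    apply (simp only: hl_if)
    apply (simp add: sum_if_const)
    done
  also have "\<dots> = (\<Sum>i<m. \<Sum>j<m. \<Sum>c<n. cnj (u $ i) * M $$ (i*n+c, j*n+c) * u $ j)"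
    by (simp add: sum.swap[of _ "{..<n}"])
  also have "\<dots> = qform (ptrace2 m n M) u"
    by (simp add: qform_def ptrace2_def sum_distrib_left sum_distrib_right)
  finally show ?thesis by simp
qed
lemma ptrace_carrier: "ptrace2 m n M \<in> carrier_mat m m" by (simp add: ptrace2_def)

lemma psd_ptrace:
  assumes "psd (m*n) M"
  shows "psd m (ptrace2 m n M)"
  unfolding psd_def
proof (intro conjI ballI ptrace_carrier)
  fix u :: "complex vec" assume u: "u \<in> carrier_vec m"
  have M: "M \<in> carrier_mat (m*n) (m*n)" using assms by (simp add: psd_def)
  let ?w = "\<lambda>c. vec (m*n) (\<lambda>p. if p mod n = c then u $ (p div n) else 0)"
  have "\<forall>c. Im (qform M (?w c)) = 0 \<and> Re (qform M (?w c)) \<ge> 0" using assms by (auto simp: psd_def)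
  then show "Im (qform (ptrace2 m n M) u) = 0" "Re (qform (ptrace2 m n M) u) \<ge> 0"
    unfolding qform_ptrace[OF M u] by (auto simp: Im_sum Re_sum intro: sum_nonneg)
qed

lemma pd_ptrace:
  assumes "pd (m*n) M" and n: "n > 0"
  shows "pd m (ptrace2 m n M)"
  unfolding pd_def
proof (intro conjI ballI impI psd_ptrace)
  show "psd (m*n) M" using assms by (simp add: pd_def)
  fix u :: "complex vec" assume u: "u \<in> carrier_vec m" and nz: "u \<noteq> 0\<^sub>v m"
  have M: "M \<in> carrier_mat (m*n) (m*n)" using assms by (simp add: pd_def psd_def)
  let ?w = "\<lambda>c. vec (m*n) (\<lambda>p. if p mod n = c then u $ (p div n) else 0)"
  have ge: "\<forall>c. Re (qform M (?w c)) \<ge> 0" using assms by (auto simp: pd_def psd_def)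
  obtain i where i: "i < m" "u $ i \<noteq> 0" using u nz by (metis eq_vecI carrier_vecD index_zero_vec(1,2))
  have "?w 0 \<noteq> 0\<^sub>v (m*n)"
  proof
    assume "?w 0 = 0\<^sub>v (m*n)"
    then have "?w 0 $ (i*n+0) = 0\<^sub>v (m*n) $ (i*n+0)" by simp
    then show False using i n idx_lt[of i m 0 n] by simp
  qed
  then have gt: "Re (qform M (?w 0)) > 0" using assms by (auto simp: pd_def)
  show "Re (qform (ptrace2 m n M) u) > 0"
    unfolding qform_ptrace[OF M u] Re_sum by (rule sum_pos2[of "{..<n}" 0]) (use n gt ge in auto)
qed

definition diagm :: "nat \<Rightarrow> (nat \<Rightarrow> complex) \<Rightarrow> complex mat" where
  "diagm d f = mat d d (\<lambda>(i,j). if i = j then f i else 0)"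

lemma qform_diagm: "qform (diagm d f) v = (\<Sum>i<d. f i * (cnj (v $ i) * v $ i))"
  by (simp add: qform_def diagm_def if_distrib[of "\<lambda>x. _ * x * _"] cong: if_cong) (simp add: algebra_simps)

lemma cnj_mult_self: "cnj z * z = complex_of_real ((cmod z)^2)"
  by (metis complex_norm_square mult.commute)

lemma psd_diagm:
  assumes "\<forall>i<d. Im (f i) = 0 \<and> Re (f i) \<ge> 0"
  shows "psd d (diagm d f)"
  unfolding psd_def
proof (intro conjI ballI)
  show "diagm d f \<in> carrier_mat d d" by (simp add: diagm_def)
  fix v :: "complex vec"
  have T: "\<forall>i<d. Im (f i * (cnj (v $ i) * v $ i)) = 0 \<and> Re (f i * (cnj (v $ i) * v $ i)) \<ge> 0"
    using assms by (simp add: cnj_mult_self)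
  show "Im (qform (diagm d f) v) = 0"
    unfolding qform_diagm Im_sum by (rule sum.neutral) (use T in blast)
  show "Re (qform (diagm d f) v) \<ge> 0"
    unfolding qform_diagm Re_sum by (rule sum_nonneg) (use T in blast)
qed

lemma pd_diagm:
  assumes "\<forall>i<d. Im (f i) = 0 \<and> Re (f i) > 0"
  shows "pd d (diagm d f)"
  unfolding pd_def
proof (intro conjI ballI impI psd_diagm)
  show "\<forall>i<d. Im (f i) = 0 \<and> Re (f i) \<ge> 0" using assms by (auto simp: less_imp_le)
  fix v :: "complex vec" assume v: "v \<in> carrier_vec d" and nz: "v \<noteq> 0\<^sub>v d"
  obtain i where i: "i < d" "v $ i \<noteq> 0" using v nz by (metis eq_vecI carrier_vecD index_zero_vec(1,2))
  have ge: "\<forall>j<d. Re (f j * (cnj (v $ j) * v $ j)) \<ge> 0"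
    using assms by (simp add: cnj_mult_self less_imp_le)
  have gt: "Re (f i * (cnj (v $ i) * v $ i)) > 0"
    using assms i by (simp add: cnj_mult_self)
  show "Re (qform (diagm d f) v) > 0"
    unfolding qform_diagm Re_sum by (rule sum_pos2[of "{..<d}" i]) (use i gt ge in auto)
qed


lemma mtrace_add: "A \<in> carrier_mat d d \<Longrightarrow> B \<in> carrier_mat d d \<Longrightarrow> mtrace (A + B) = mtrace A + mtrace B"
  by (simp add: mtrace_def sum.distrib)
lemma mtrace_smult: "A \<in> carrier_mat d d \<Longrightarrow> mtrace (c \<cdot>\<^sub>m A) = c * mtrace A"
  by (simp add: mtrace_def sum_distrib_left)

lemma qform_smult: "qform (c \<cdot>\<^sub>m A) v = c * qform A v"
  by (simp add: qform_def sum_distrib_left algebra_simps)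

definition R1 :: "nat \<Rightarrow> complex vec \<Rightarrow> complex mat" where
  "R1 d v = mat d d (\<lambda>(a,b). v $ a * cnj (v $ b))"

lemma qform_R1: "qform (R1 d v) w = (\<Sum>a<d. cnj (w $ a) * v $ a) * cnj (\<Sum>a<d. cnj (w $ a) * v $ a)"
  by (simp add: qform_def R1_def sum_product cnj_sum algebra_simps)

lemma psd_R1: "psd d (R1 d v)"
  unfolding psd_def
proof (intro conjI ballI)
  show "R1 d v \<in> carrier_mat d d" by (simp add: R1_def)
  fix w :: "complex vec"
  define z where "z = (\<Sum>a<d. cnj (w $ a) * v $ a)"
  have "qform (R1 d v) w = complex_of_real ((cmod z)^2)"
    unfolding qform_R1 z_def[symmetric] by (metis complex_norm_square)
  then show "Im (qform (R1 d v) w) = 0" "Re (qform (R1 d v) w) \<ge> 0" by simp_all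
qed

lemma mtrace_R1: "mtrace (R1 d v) = complex_of_real (\<Sum>a<d. (cmod (v $ a))^2)"
  by (simp add: mtrace_def R1_def of_real_sum) (intro sum.cong refl, metis complex_norm_square of_real_power)

lemma psd_smult: "psd d A \<Longrightarrow> r \<ge> 0 \<Longrightarrow> psd d (complex_of_real r \<cdot>\<^sub>m A)"
  by (auto simp: psd_def qform_smult)

locale linext =
  fixes d :: nat and h :: "complex mat \<Rightarrow> complex"
  assumes hadd: "\<And>A B. A \<in> carrier_mat d d \<Longrightarrow> B \<in> carrier_mat d d \<Longrightarrow> h (A + B) = h A + h B"
    and hsm: "\<And>A c. A \<in> carrier_mat d d \<Longrightarrow> h (c \<cdot>\<^sub>m A) = c * h A"
    and hst: "\<And>\<rho>. is_state d \<rho> \<Longrightarrow> h \<rho> = 0"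
begin

lemma h_R1: "h (R1 d v) = 0"
proof -
  define r where "r = (\<Sum>a<d. (cmod (v $ a))^2)"
  have C: "R1 d v \<in> carrier_mat d d" by (simp add: R1_def)
  show ?thesis
  proof (cases "r = 0")
    case True
    then have "\<forall>a\<in>{..<d}. (cmod (v $ a))^2 = 0" unfolding r_def
      by (subst sum_nonneg_eq_0_iff[symmetric]) auto
    then have "R1 d v = 0 \<cdot>\<^sub>m R1 d v" by (intro eq_matI) (auto simp: R1_def)
    then show ?thesis using hsm[OF C, of 0] by simp
  next
    case False
    have rpos: "r > 0" using False unfolding r_def by (metis sum_nonneg zero_le_power2 order_le_less)
    have st: "is_state d (complex_of_real (1/r) \<cdot>\<^sub>m R1 d v)"
      unfolding is_state_def using rpos psd_smult[OF psd_R1[of d v], of "1/r"]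
      by (simp add: mtrace_smult[OF C] mtrace_R1 r_def[symmetric])
    have "R1 d v = complex_of_real r \<cdot>\<^sub>m (complex_of_real (1/r) \<cdot>\<^sub>m R1 d v)"
      using rpos by (intro eq_matI) (auto simp: R1_def)
    then have "h (R1 d v) = complex_of_real r * h (complex_of_real (1/r) \<cdot>\<^sub>m R1 d v)"
      using hsm C by (metis smult_carrier_mat)
    then show ?thesis using hst[OF st] by simp
  qed
qed

definition Eu :: "nat \<Rightarrow> nat \<Rightarrow> complex mat" where
  "Eu i j = mat d d (\<lambda>(a,b). if a = i \<and> b = j then 1 else 0)"

lemma Eu_carrier: "Eu i j \<in> carrier_mat d d" by (simp add: Eu_def)

lemma h_Eu: assumes "i < d" "j < d" shows "h (Eu i j) = 0"
proof (cases "i = j")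
  case True
  have "Eu i j = R1 d (unit_vec d i)" using True assms
    by (intro eq_matI) (auto simp: Eu_def R1_def)
  then show ?thesis using h_R1 by simp
next
  case False
  let ?u = "unit_vec d i + unit_vec d j" and ?w = "unit_vec d i + \<i> \<cdot>\<^sub>v unit_vec d j"
  have eq: "2 \<cdot>\<^sub>m Eu i j = (R1 d ?u + \<i> \<cdot>\<^sub>m R1 d ?w) + ((- (1+\<i>)) \<cdot>\<^sub>m R1 d (unit_vec d i) + (- (1+\<i>)) \<cdot>\<^sub>m R1 d (unit_vec d j))"
    using False assms by (intro eq_matI) (auto simp: Eu_def R1_def algebra_simps)
  have C: "\<And>v. R1 d v \<in> carrier_mat d d" by (simp add: R1_def)
  have "h (2 \<cdot>\<^sub>m Eu i j) = 0"
    unfolding eq by (simp add: hadd hsm C h_R1)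
  then show ?thesis using hsm[of "Eu i j" 2] by (simp add: Eu_def)
qed

lemma h_all: assumes B: "B \<in> carrier_mat d d" shows "h B = 0"
proof -
  define BS where "BS S = mat d d (\<lambda>(a,b). if (a,b) \<in> S then B $$ (a,b) else 0)" for S
  have "h (BS S) = 0" if "finite S" "S \<subseteq> {..<d} \<times> {..<d}" for S
    using that
  proof (induction S rule: finite_induct)
    case empty
    have "BS {} = 0 \<cdot>\<^sub>m BS {}" by (intro eq_matI) (auto simp: BS_def)
    then show ?case using hsm[of "BS {}" 0] by (simp add: BS_def)
  next
    case (insert p S)
    obtain i j where p: "p = (i,j)" by fastforce
    have ij: "i < d" "j < d" using insert p by auto
    have "BS (insert p S) = BS S + B $$ (i,j) \<cdot>\<^sub>m Eu i j"
      using insert p by (intro eq_matI) (auto simp: BS_def Eu_def)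
    moreover have "BS S \<in> carrier_mat d d" by (simp add: BS_def)
    ultimately show ?case using insert ij by (simp add: hadd hsm h_Eu Eu_carrier)
  qed
  moreover have "BS ({..<d} \<times> {..<d}) = B" using B by (intro eq_matI) (auto simp: BS_def)
  ultimately show ?thesis by force
qed
end

lemma lin_ext:
  assumes lin: "lin_map d d \<Phi>" and E: "E \<in> carrier_mat d d"
    and st: "\<forall>\<rho>. is_state d \<rho> \<longrightarrow> mtrace (\<Phi> \<rho>) = mtrace (E * \<rho>)"
    and B: "B \<in> carrier_mat d d"
  shows "mtrace (\<Phi> B) = mtrace (E * B)"
proof -
  interpret linext d "\<lambda>B. mtrace (\<Phi> B) - mtrace (E * B)"
  proof
    fix A B :: "complex mat" assume A: "A \<in> carrier_mat d d" and B: "B \<in> carrier_mat d d"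
    have "\<Phi> (A + B) = \<Phi> A + \<Phi> B" "\<Phi> A \<in> carrier_mat d d" "\<Phi> B \<in> carrier_mat d d"
      using lin A B by (auto simp: lin_map_def)
    moreover have "E * (A + B) = E * A + E * B" using E A B by (simp add: mult_add_distrib_mat)
    ultimately show "mtrace (\<Phi> (A + B)) - mtrace (E * (A + B)) = mtrace (\<Phi> A) - mtrace (E * A) + (mtrace (\<Phi> B) - mtrace (E * B))"
      using E A B by (simp add: mtrace_add[of _ d])
  next
    fix A :: "complex mat" and c assume A: "A \<in> carrier_mat d d"
    have "\<Phi> (c \<cdot>\<^sub>m A) = c \<cdot>\<^sub>m \<Phi> A" "\<Phi> A \<in> carrier_mat d d" using lin A by (auto simp: lin_map_def)
    moreover have "E * (c \<cdot>\<^sub>m A) = c \<cdot>\<^sub>m (E * A)" using E A by (simp add: mult_smult_distrib)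
    ultimately show "mtrace (\<Phi> (c \<cdot>\<^sub>m A)) - mtrace (E * (c \<cdot>\<^sub>m A)) = c * (mtrace (\<Phi> A) - mtrace (E * A))"
      using E A by (simp add: mtrace_smult[of _ d] algebra_simps)
  next
    fix \<rho> assume "is_state d \<rho>" then show "mtrace (\<Phi> \<rho>) - mtrace (E * \<rho>) = 0" using st by simp
  qed
  show ?thesis using h_all[OF B] by simp
qed


lemma mod_div_aux: "(n::nat) > 0 \<Longrightarrow> a mod (m*n) div n = a div n mod m"
proof -
  assume n: "n > 0"
  have "a mod (m*n) = n * (a div n mod m) + a mod n" by (metis mod_mult2_eq mult.commute)
  then show ?thesis using n by simp
qed

lemma ampl_Ec:
  assumes n: "n > 0" and m: "m > 0"
  shows "ampl k (m*n) (m*n) (\<lambda>\<sigma>. asm n m (\<lambda>s. \<Phi> s (ptrace2 m n \<sigma>))) M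
       = asm n (k*m) (\<lambda>s. ampl k m m (\<Phi> s) (ptrace2 (k*m) n M))"
proof (rule eq_matI)
  show "dim_row (ampl k (m*n) (m*n) (\<lambda>\<sigma>. asm n m (\<lambda>s. \<Phi> s (ptrace2 m n \<sigma>))) M) = dim_row (asm n (k*m) (\<lambda>s. ampl k m m (\<Phi> s) (ptrace2 (k*m) n M)))"
    by (simp add: ampl_def asm_def)
  show "dim_col (ampl k (m*n) (m*n) (\<lambda>\<sigma>. asm n m (\<lambda>s. \<Phi> s (ptrace2 m n \<sigma>))) M) = dim_col (asm n (k*m) (\<lambda>s. ampl k m m (\<Phi> s) (ptrace2 (k*m) n M)))"
    by (simp add: ampl_def asm_def)
  fix p q assume p: "p < dim_row (asm n (k*m) (\<lambda>s. ampl k m m (\<Phi> s) (ptrace2 (k*m) n M)))"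
    and q: "q < dim_col (asm n (k*m) (\<lambda>s. ampl k m m (\<Phi> s) (ptrace2 (k*m) n M)))"
  have p': "p < k*(m*n)" and q': "q < k*(m*n)" using p q by (simp_all add: asm_def mult.assoc)
  have P: "p mod (m*n) < m*n" and Q: "q mod (m*n) < m*n" using n m by simp_all
  have modP: "p mod (m*n) mod n = p mod n" "q mod (m*n) mod n = q mod n" by (simp_all add: mod_mod_cancel)
  have divP: "p mod (m*n) div n = p div n mod m" "q mod (m*n) div n = q div n mod m"
    using n by (simp_all add: mod_div_aux)
  have dd: "p div n div m = p div (m*n)" "q div n div m = q div (m*n)"
    by (metis div_mult2_eq mult.commute)+
  have pdn: "p div n < k*m" "q div n < k*m" using p' q' n
    by (simp_all add: less_mult_imp_div_less mult.assoc[symmetric])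
  have pk: "p div (m*n) < k" "q div (m*n) < k" using p' q' n m
    by (simp_all add: less_mult_imp_div_less)
  have inner: "ptrace2 m n (mat (m*n) (m*n) (\<lambda>(a,b). M $$ (p div (m*n) * (m*n) + a, q div (m*n) * (m*n) + b)))
     = mat m m (\<lambda>(a,b). ptrace2 (k*m) n M $$ (p div n div m * m + a, q div n div m * m + b))"
  proof (rule eq_matI)
    fix i j assume i: "i < dim_row (mat m m (\<lambda>(a,b). ptrace2 (k*m) n M $$ (p div n div m * m + a, q div n div m * m + b)))"
      and j: "j < dim_col (mat m m (\<lambda>(a,b). ptrace2 (k*m) n M $$ (p div n div m * m + a, q div n div m * m + b)))"
    have i': "i < m" "j < m" using i j by simp_all
    have lt: "p div (m*n) * m + i < k*m" "q div (m*n) * m + j < k*m"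
      using i' pk idx_lt by (simp_all add: idx_lt)
    show "ptrace2 m n (mat (m*n) (m*n) (\<lambda>(a,b). M $$ (p div (m*n) * (m*n) + a, q div (m*n) * (m*n) + b))) $$ (i,j)
      = mat m m (\<lambda>(a,b). ptrace2 (k*m) n M $$ (p div n div m * m + a, q div n div m * m + b)) $$ (i,j)"
      apply (simp add: ptrace2_def dd i' lt)
      apply (intro sum.cong refl)
      subgoal for c
        using idx_lt[of i m c n] idx_lt[of j m c n] i'
        apply (simp add: add.commute)
        apply (simp add: algebra_simps)
        done
      done
  qed (simp_all add: ptrace2_def)
  show "ampl k (m*n) (m*n) (\<lambda>\<sigma>. asm n m (\<lambda>s. \<Phi> s (ptrace2 m n \<sigma>))) M $$ (p,q)
      = asm n (k*m) (\<lambda>s. ampl k m m (\<Phi> s) (ptrace2 (k*m) n M)) $$ (p,q)"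
    using p' q' P Q pdn by (simp add: ampl_def asm_def modP divP inner mult.assoc)
qed


lemma ptrace_add:
  assumes "A \<in> carrier_mat (m*n) (m*n)" "B \<in> carrier_mat (m*n) (m*n)"
  shows "ptrace2 m n (A + B) = ptrace2 m n A + ptrace2 m n B"
proof (rule eq_matI)
  fix i j assume ij: "i < dim_row (ptrace2 m n A + ptrace2 m n B)" "j < dim_col (ptrace2 m n A + ptrace2 m n B)"
  then have i: "i < m" "j < m" by (simp_all add: ptrace2_def)
  show "ptrace2 m n (A + B) $$ (i, j) = (ptrace2 m n A + ptrace2 m n B) $$ (i, j)"
    using i assms by (simp add: ptrace2_def idx_lt sum.distrib)
qed (simp_all add: ptrace2_def)

lemma ptrace_smult:
  assumes "A \<in> carrier_mat (m*n) (m*n)"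
  shows "ptrace2 m n (c \<cdot>\<^sub>m A) = c \<cdot>\<^sub>m ptrace2 m n A"
proof (rule eq_matI)
  fix i j assume ij: "i < dim_row (c \<cdot>\<^sub>m ptrace2 m n A)" "j < dim_col (c \<cdot>\<^sub>m ptrace2 m n A)"
  then have i: "i < m" "j < m" by (simp_all add: ptrace2_def)
  show "ptrace2 m n (c \<cdot>\<^sub>m A) $$ (i, j) = (c \<cdot>\<^sub>m ptrace2 m n A) $$ (i, j)"
    using i assms by (simp add: ptrace2_def idx_lt sum_distrib_left)
qed (simp_all add: ptrace2_def)

lemma idx_div_lt: "p < m*n \<Longrightarrow> p div n < (m::nat)"
  by (simp add: less_mult_imp_div_less)
lemma idx_mod_lt: "p < m*n \<Longrightarrow> p mod n < (n::nat)"
  by (cases "n = 0") auto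

lemma asm_cong: "(\<And>s. s < n \<Longrightarrow> F s = G s) \<Longrightarrow> asm n m F = asm n m G"
  unfolding asm_def by (intro eq_matI) (auto simp: idx_mod_lt)

lemma asm_add:
  assumes "\<forall>s<n. F s \<in> carrier_mat m m \<and> G s \<in> carrier_mat m m"
  shows "asm n m (\<lambda>s. F s + G s) = asm n m F + asm n m G"
proof (rule eq_matI)
  fix p q assume "p < dim_row (asm n m F + asm n m G)" "q < dim_col (asm n m F + asm n m G)"
  then have pq: "p < m*n" "q < m*n" by (simp_all add: asm_def)
  have "F (q mod n) \<in> carrier_mat m m" "G (q mod n) \<in> carrier_mat m m" using assms idx_mod_lt[OF pq(2)] by auto
  then show "asm n m (\<lambda>s. F s + G s) $$ (p, q) = (asm n m F + asm n m G) $$ (p, q)"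
    using pq assms idx_div_lt[OF pq(1)] idx_div_lt[OF pq(2)] idx_mod_lt[OF pq(1)]
    by (auto simp: asm_def)
qed (simp_all add: asm_def)

lemma asm_smult:
  assumes "\<forall>s<n. F s \<in> carrier_mat m m"
  shows "asm n m (\<lambda>s. c \<cdot>\<^sub>m F s) = c \<cdot>\<^sub>m asm n m F"
proof (rule eq_matI)
  fix p q assume "p < dim_row (c \<cdot>\<^sub>m asm n m F)" "q < dim_col (c \<cdot>\<^sub>m asm n m F)"
  then have pq: "p < m*n" "q < m*n" by (simp_all add: asm_def)
  have "F (q mod n) \<in> carrier_mat m m" using assms idx_mod_lt[OF pq(2)] by auto
  then show "asm n m (\<lambda>s. c \<cdot>\<^sub>m F s) $$ (p, q) = (c \<cdot>\<^sub>m asm n m F) $$ (p, q)"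
    using pq assms idx_div_lt[OF pq(1)] idx_div_lt[OF pq(2)] idx_mod_lt[OF pq(1)]
    by (auto simp: asm_def)
qed (simp_all add: asm_def)

lemma diag_mult:
  assumes "A \<in> carrier_mat d c"
  shows "diagm d f * A = mat d c (\<lambda>(i,j). f i * A $$ (i,j))"
proof (rule eq_matI)
  fix i j assume "i < dim_row (mat d c (\<lambda>(i,j). f i * A $$ (i,j)))" "j < dim_col (mat d c (\<lambda>(i,j). f i * A $$ (i,j)))"
  then have ij: "i < d" "j < c" by simp_all
  have "(diagm d f * A) $$ (i,j) = (\<Sum>r<d. (if i = r then f i else 0) * A $$ (r,j))"
    using ij assms by (simp add: diagm_def scalar_prod_def lessThan_atLeast0)
  also have "\<dots> = f i * A $$ (i,j)"
    using ij by (simp add: if_distrib[of "\<lambda>x. x * _"] cong: if_cong)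
  finally show "(diagm d f * A) $$ (i,j) = mat d c (\<lambda>(i,j). f i * A $$ (i,j)) $$ (i,j)" using ij by simp
qed (use assms in \<open>simp_all add: diagm_def\<close>)

lemma kron_one_diag:
  assumes n: "n > 0"
  shows "kron (1\<^sub>m m) (diagm n f) = diagm (m*n) (\<lambda>p. f (p mod n))"
proof (rule eq_matI)
  fix p q assume "p < dim_row (diagm (m*n) (\<lambda>p. f (p mod n)))" "q < dim_col (diagm (m*n) (\<lambda>p. f (p mod n)))"
  then have pq: "p < m*n" "q < m*n" by (simp_all add: diagm_def)
  have eq: "(p div n = q div n \<and> p mod n = q mod n) = (p = q)"
    by (metis div_mult_mod_eq)
  show "kron (1\<^sub>m m) (diagm n f) $$ (p,q) = diagm (m*n) (\<lambda>p. f (p mod n)) $$ (p,q)"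
    using pq idx_div_lt[OF pq(1)] idx_div_lt[OF pq(2)] idx_mod_lt[OF pq(1)] idx_mod_lt[OF pq(2)] eq
    by (auto simp: kron_def diagm_def)
qed (simp_all add: kron_def diagm_def)

lemma trace_msum:
  assumes "msum m X E = 1\<^sub>m m" "\<forall>x\<in>X. E x \<in> carrier_mat m m" "B \<in> carrier_mat m m"
  shows "(\<Sum>x\<in>X. mtrace (E x * B)) = mtrace B"
proof -
  have "(\<Sum>x\<in>X. mtrace (E x * B)) = (\<Sum>x\<in>X. \<Sum>i<m. \<Sum>j<m. E x $$ (i,j) * B $$ (j,i))"
  proof (intro sum.cong refl)
    fix x assume "x \<in> X"
    then have "E x \<in> carrier_mat m m" using assms(2) by auto
    then show "mtrace (E x * B) = (\<Sum>i<m. \<Sum>j<m. E x $$ (i,j) * B $$ (j,i))"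
      using assms(3) by (simp add: mtrace_def scalar_prod_def lessThan_atLeast0)
  qed
  also have "\<dots> = (\<Sum>i<m. \<Sum>j<m. (\<Sum>x\<in>X. E x $$ (i,j)) * B $$ (j,i))"
    by (simp add: sum.swap[of _ X] sum_distrib_right)
  also have "\<dots> = (\<Sum>i<m. \<Sum>j<m. msum m X E $$ (i,j) * B $$ (j,i))"
    by (intro sum.cong refl) (simp add: msum_def)
  also have "\<dots> = (\<Sum>i<m. B $$ (i,i))"
    unfolding assms(1) by (intro sum.cong refl) (simp add: if_distrib[of "\<lambda>x. x * _"] cong: if_cong)
  also have "\<dots> = mtrace B" using assms(3) by (simp add: mtrace_def)
  finally show ?thesis .
qed

lemma ptrace_kron:
  assumes r: "\<rho> \<in> carrier_mat m m" and xi: "\<xi> \<in> carrier_mat n n" and tr: "mtrace \<xi> = 1"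
  shows "ptrace2 m n (kron \<rho> \<xi>) = \<rho>"
proof (rule eq_matI)
  fix i j assume "i < dim_row \<rho>" "j < dim_col \<rho>"
  then have ij: "i < m" "j < m" using r by simp_all
  have "ptrace2 m n (kron \<rho> \<xi>) $$ (i,j) = (\<Sum>c<n. \<rho> $$ (i,j) * \<xi> $$ (c,c))"
    using ij r xi by (simp add: ptrace2_def kron_def) (intro sum.cong refl, simp add: idx_lt)
  also have "\<dots> = \<rho> $$ (i,j)" using tr xi by (simp add: mtrace_def sum_distrib_left[symmetric])
  finally show "ptrace2 m n (kron \<rho> \<xi>) $$ (i,j) = \<rho> $$ (i,j)" .
qed (use r in \<open>simp_all add: ptrace2_def\<close>)


theorem mainTheorem13:
  fixes dS :: nat and X :: "'x set" and E :: "'x \<Rightarrow> complex mat"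
    and I :: "'x \<Rightarrow> complex mat \<Rightarrow> complex mat"
  assumes "2 \<le> dS"
    and "completely_unsharp dS X E"
    and "E_instrument dS X E I"
    and "\<forall>\<rho> x. full_rank_state dS \<rho> \<and> x \<in> X \<longrightarrow> pd dS (I x \<rho>)"
  shows "\<exists>dA \<xi> Ec Z. implements dS X I dA \<xi> Ec Z \<and> third_law_scheme dS dA \<xi> Ec"
proof -
  define m where "m = dS"
  have m: "m > 0" using assms(1) by (simp add: m_def)
  have obs: "observable m X E" using assms(2) by (simp add: completely_unsharp_def m_def)
  have finX: "finite X" and msum1: "msum m X E = 1\<^sub>m m" and Ecar: "\<forall>x\<in>X. E x \<in> carrier_mat m m"
    using obs by (auto simp: observable_def psd_def)
  have cpI: "\<forall>x\<in>X. cp_map m m (I x)" and trI: "\<forall>x\<in>X. \<forall>\<rho>. is_state m \<rho> \<longrightarrow> mtrace (I x \<rho>) = mtrace (E x * \<rho>)"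
    using assms(3) by (auto simp: E_instrument_def m_def)
  have linI: "\<forall>x\<in>X. lin_map m m (I x)" using cpI by (simp add: cp_map_def)
  have Icar: "\<And>x A. x \<in> X \<Longrightarrow> A \<in> carrier_mat m m \<Longrightarrow> I x A \<in> carrier_mat m m"
    using linI by (auto simp: lin_map_def)
  have pdI: "\<And>\<rho> x. full_rank_state m \<rho> \<Longrightarrow> x \<in> X \<Longrightarrow> pd m (I x \<rho>)" using assms(4) by (auto simp: m_def)
  define n where "n = card X"
  have Xne: "X \<noteq> {}"
  proof
    assume "X = {}"
    then have "msum m X E $$ (0,0) = 0" using m by (simp add: msum_def)
    moreover have "(1\<^sub>m m :: complex mat) $$ (0,0) = 1" using m by simp
    ultimately show False using msum1 by simp
  qed
  have n: "n > 0" using finX Xne by (simp add: n_def card_gt_0_iff)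
  obtain g where g: "bij_betw g {..<n} X" using ex_bij_betw_nat_finite[OF finX] by (auto simp: n_def lessThan_atLeast0)
  have gX: "\<And>s. s < n \<Longrightarrow> g s \<in> X" using g by (auto simp: bij_betw_def)
  define Ec where "Ec \<sigma> = asm n m (\<lambda>s. I (g s) (ptrace2 m n \<sigma>))" for \<sigma>
  define \<xi> where "\<xi> = diagm n (\<lambda>_. complex_of_real (1 / real n))"
  define Z where "Z x = diagm n (\<lambda>s. if g s = x then 1 else 0)" for x

  have EcC: "\<And>A. Ec A \<in> carrier_mat (m*n) (m*n)" by (simp add: Ec_def asm_carrier)
  have lin: "lin_map (m*n) (m*n) Ec"
    unfolding lin_map_def
  proof (intro conjI ballI allI EcC)
    fix A B :: "complex mat" assume A: "A \<in> carrier_mat (m*n) (m*n)" and B: "B \<in> carrier_mat (m*n) (m*n)"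
    have "\<And>s. s < n \<Longrightarrow> I (g s) (ptrace2 m n (A + B)) = I (g s) (ptrace2 m n A) + I (g s) (ptrace2 m n B)"
      using linI gX ptrace_carrier by (simp add: ptrace_add[OF A B] lin_map_def)
    then have "Ec (A + B) = asm n m (\<lambda>s. I (g s) (ptrace2 m n A) + I (g s) (ptrace2 m n B))"
      unfolding Ec_def by (rule asm_cong)
    also have "\<dots> = Ec A + Ec B" unfolding Ec_def
      by (rule asm_add) (simp add: gX Icar ptrace_carrier)
    finally show "Ec (A + B) = Ec A + Ec B" .
  next
    fix A :: "complex mat" and c assume A: "A \<in> carrier_mat (m*n) (m*n)"
    have "\<And>s. s < n \<Longrightarrow> I (g s) (ptrace2 m n (c \<cdot>\<^sub>m A)) = c \<cdot>\<^sub>m I (g s) (ptrace2 m n A)"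
      using linI gX ptrace_carrier by (simp add: ptrace_smult[OF A] lin_map_def)
    then have "Ec (c \<cdot>\<^sub>m A) = asm n m (\<lambda>s. c \<cdot>\<^sub>m I (g s) (ptrace2 m n A))"
      unfolding Ec_def by (rule asm_cong)
    also have "\<dots> = c \<cdot>\<^sub>m Ec A" unfolding Ec_def
      by (rule asm_smult) (simp add: gX Icar ptrace_carrier)
    finally show "Ec (c \<cdot>\<^sub>m A) = c \<cdot>\<^sub>m Ec A" .
  qed
  have cp: "cp_map (m*n) (m*n) Ec"
    unfolding cp_map_def
  proof (intro conjI allI impI lin)
    fix k M assume M: "psd (k*(m*n)) M"
    have Ecf: "Ec = (\<lambda>\<sigma>. asm n m (\<lambda>s. I (g s) (ptrace2 m n \<sigma>)))" by (simp add: Ec_def fun_eq_iff)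
    have "psd (k*m) (ptrace2 (k*m) n M)" using M by (intro psd_ptrace) (simp add: mult.assoc)
    then have "\<forall>s<n. psd (k*m) (ampl k m m (I (g s)) (ptrace2 (k*m) n M))"
      using cpI gX by (auto simp: cp_map_def)
    then have "psd ((k*m)*n) (asm n (k*m) (\<lambda>s. ampl k m m (I (g s)) (ptrace2 (k*m) n M)))"
      by (rule psd_asm)
    then show "psd (k*(m*n)) (ampl k (m*n) (m*n) Ec M)"
      unfolding Ecf using ampl_Ec[OF n m, where \<Phi>="\<lambda>s. I (g s)" and k=k and M=M] by (simp add: mult.assoc)
  qed
  have tr: "mtrace (Ec A) = mtrace A" if A: "A \<in> carrier_mat (m*n) (m*n)" for A
  proof -
    have "mtrace (Ec A) = (\<Sum>s<n. mtrace (I (g s) (ptrace2 m n A)))"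
      unfolding Ec_def by (rule mtrace_asm') (simp add: gX Icar ptrace_carrier)
    also have "\<dots> = (\<Sum>x\<in>X. mtrace (I x (ptrace2 m n A)))"
      using sum.reindex_bij_betw[OF g, of "\<lambda>x. mtrace (I x (ptrace2 m n A))"] by simp
    also have "\<dots> = (\<Sum>x\<in>X. mtrace (E x * ptrace2 m n A))"
      using linI Ecar trI by (intro sum.cong refl lin_ext) (auto simp: ptrace_carrier)
    also have "\<dots> = mtrace (ptrace2 m n A)"
      using msum1 Ecar by (intro trace_msum) (auto simp: ptrace_carrier)
    also have "\<dots> = mtrace A" using A by (rule mtrace_ptrace)
    finally show ?thesis .
  qed
  have chan: "channel (m*n) (m*n) Ec" using cp tr by (simp add: channel_def)
  have third: "third_law_channel (m*n) (m*n) Ec"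
    unfolding third_law_channel_def
  proof (intro conjI allI impI chan)
    fix \<sigma> assume fs: "full_rank_state (m*n) \<sigma>"
    have sc: "\<sigma> \<in> carrier_mat (m*n) (m*n)" "mtrace \<sigma> = 1" "pd (m*n) \<sigma>"
      using fs by (auto simp: full_rank_state_def is_state_def psd_def)
    have "full_rank_state m (ptrace2 m n \<sigma>)"
      using pd_ptrace[OF sc(3) n] mtrace_ptrace[OF sc(1)] sc(2)
      by (simp add: full_rank_state_def is_state_def pd_def)
    then have "\<forall>s<n. pd m (I (g s) (ptrace2 m n \<sigma>))" using pdI gX by auto
    then have "pd (m*n) (Ec \<sigma>)" unfolding Ec_def by (rule pd_asm)
    then show "full_rank_state (m*n) (Ec \<sigma>)"
      using tr[OF sc(1)] sc(2) by (simp add: full_rank_state_def is_state_def pd_def)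
  qed
  have xi: "full_rank_state n \<xi>"
  proof -
    have "pd n \<xi>" unfolding \<xi>_def using n by (intro pd_diagm) simp
    moreover have "mtrace \<xi> = 1" using n by (simp add: \<xi>_def diagm_def mtrace_def)
    ultimately show ?thesis by (simp add: full_rank_state_def is_state_def pd_def)
  qed
  have xicar: "\<xi> \<in> carrier_mat n n" by (simp add: \<xi>_def diagm_def)
  have Zpsd: "\<forall>x\<in>X. psd n (Z x)" unfolding Z_def by (auto intro!: psd_diagm)
  have Zsum: "msum n X Z = 1\<^sub>m n"
  proof (rule eq_matI)
    fix i j assume "i < dim_row (1\<^sub>m n :: complex mat)" "j < dim_col (1\<^sub>m n :: complex mat)"
    then have ij: "i < n" "j < n" by simp_all
    have "msum n X Z $$ (i,j) = (\<Sum>x\<in>X. if i = j then (if g i = x then 1 else 0) else 0)"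
      using ij by (simp add: msum_def Z_def diagm_def)
    also have "\<dots> = (1\<^sub>m n :: complex mat) $$ (i,j)" using ij gX finX by simp
    finally show "msum n X Z $$ (i,j) = (1\<^sub>m n :: complex mat) $$ (i,j)" .
  qed (simp_all add: msum_def)
  have impl: "I x \<rho> = ptrace2 m n (kron (1\<^sub>m m) (Z x) * Ec (kron \<rho> \<xi>))"
    if x: "x \<in> X" and r: "\<rho> \<in> carrier_mat m m" for x \<rho>
  proof -
    obtain c0 where c0: "c0 < n" "g c0 = x" using g x by (auto simp: bij_betw_def)
    have gc: "\<And>c. c < n \<Longrightarrow> (g c = x) = (c = c0)" using g c0 by (auto simp: bij_betw_def inj_on_def)
    have pk: "ptrace2 m n (kron \<rho> \<xi>) = \<rho>" using r xicar xi
      by (intro ptrace_kron) (auto simp: full_rank_state_def is_state_def)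
    have EK: "Ec (kron \<rho> \<xi>) = asm n m (\<lambda>s. I (g s) \<rho>)" by (simp add: Ec_def pk)
    have KZ: "kron (1\<^sub>m m) (Z x) = diagm (m*n) (\<lambda>p. if g (p mod n) = x then 1 else 0)"
      unfolding Z_def using n by (simp add: kron_one_diag)
    have prod: "kron (1\<^sub>m m) (Z x) * Ec (kron \<rho> \<xi>) = mat (m*n) (m*n) (\<lambda>(p,q). (if g (p mod n) = x then 1 else 0) * asm n m (\<lambda>s. I (g s) \<rho>) $$ (p,q))"
      unfolding KZ EK by (rule diag_mult) (rule asm_carrier)
    show ?thesis
    proof (rule eq_matI)
      fix i j assume "i < dim_row (ptrace2 m n (kron (1\<^sub>m m) (Z x) * Ec (kron \<rho> \<xi>)))"
        "j < dim_col (ptrace2 m n (kron (1\<^sub>m m) (Z x) * Ec (kron \<rho> \<xi>)))"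
      then have ij: "i < m" "j < m" by (simp_all add: ptrace2_def)
      have "ptrace2 m n (kron (1\<^sub>m m) (Z x) * Ec (kron \<rho> \<xi>)) $$ (i,j) = (\<Sum>c<n. (kron (1\<^sub>m m) (Z x) * Ec (kron \<rho> \<xi>)) $$ (i*n+c, j*n+c))"
        using ij by (simp add: ptrace2_def)
      also have "\<dots> = (\<Sum>c<n. if c = c0 then I x \<rho> $$ (i,j) else 0)"
      proof (rule sum.cong[OF refl])
        fix c assume c: "c \<in> {..<n}"
        then have lt: "i*n+c < m*n" "j*n+c < m*n" using ij by (simp_all add: idx_lt)
        show "(kron (1\<^sub>m m) (Z x) * Ec (kron \<rho> \<xi>)) $$ (i*n+c, j*n+c) = (if c = c0 then I x \<rho> $$ (i,j) else 0)"
          unfolding prod using lt c gc[of c] c0 by (auto simp: asm_def)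
      qed
      also have "\<dots> = I x \<rho> $$ (i,j)" using c0 by simp
      finally show "I x \<rho> $$ (i,j) = ptrace2 m n (kron (1\<^sub>m m) (Z x) * Ec (kron \<rho> \<xi>)) $$ (i,j)" by simp
    qed (use Icar[OF x r] in \<open>simp_all add: ptrace2_def\<close>)
  qed
  have "implements dS X I n \<xi> Ec Z"
    unfolding implements_def m_def[symmetric]
    using xi chan Zpsd Zsum impl by (auto simp: full_rank_state_def)
  moreover have "third_law_scheme dS n \<xi> Ec"
    unfolding third_law_scheme_def m_def[symmetric] using xi third by simp
  ultimately show ?thesis by blast
qed

end
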